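(* Consider the latent causal generative model described in the context. Let $\mathrm g$ be the true decoder and $\mathbf f=\hat{\mathrm g}^{-1}$ an estimated encoder, both smooth and invertible, and write $\mathbf f(\mathbf x)=(\mathbf f_\iota(\mathbf x),\mathbf f_\nu(\mathbf x))$, where $\mathbf f_\iota$ is the $d_\iota$-dimensional component intended to estimate the invariant noise $\mathbf n_\iota$ (its output is denoted $\hat{\mathbf n}_\iota$). For $(\mathbf n_\iota,\mathbf n_\nu,\mathbf u)$ let $\mathbf z(\mathbf n_\iota,\mathbf n_\nu,\mathbf u)$ be the unique solution of the linear structural equations. Assume that for any fixed $\mathbf n_\iota$ and any environments $\mathbf u,\mathbf u_0$, if $\mathbf N_\nu^{(\mathbf u)}$ and $\mathbf N_\nu^{(\mathbf u_0)}$ are independent draws from the corresponding noise distributions $\mathcal N(\boldsymbol\mu_\nu(\mathbf u),\operatorname{diag}\boldsymbol\beta_\nu(\mathbf u))$ and $\mathcal N(\boldsymbol\mu_\nu(\mathbf u_0),\operatorname{diag}\boldsymbol\beta_\nu(\mathbf u_0))$, then $$\mathbf f_\iota\big(\mathrm g(\mathbf z(\mathbf n_\iota,\mathbf N_\nu^{(\mathbf u)},\mathbf u))\big)=\mathbf f_\iota\big(\mathrm g(\mathbf z(\mathbf n_\iota,\mathbf N_\nu^{(\mathbf u_0)},\mathbf u_0))\big)\quad\text{a.s.}$$ Then there exists a smooth function $\mathbf h_\iota$ such that $\mathbf f_\iota\big(\mathrm g(\mathbf z(\mathbf n_\iota,\mathbf n_\nu,\mathbf u))\big)=\mathbf h_\iota(\mathbf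 n_\iota)$ almost surely, i.e. $\hat{\mathbf n}_\iota$ does not depend on $\mathbf n_\nu$.
   Context: Latent causal generative model: latent variables $\mathbf z_\iota\in\mathbb R^{d_\iota}$ and $\mathbf z_\nu\in\mathbb R^{d_\nu}$, $\mathbf z=(\mathbf z_\iota,\mathbf z_\nu)$, auxiliary environment label $\mathbf u$. Data are generated by $\mathbf z_\iota:=\boldsymbol\lambda_{\iota\iota}\mathbf z_\iota+\mathbf n_\iota$, $\mathbf n_\iota\sim\mathcal N(\boldsymbol\mu_\iota,\operatorname{diag}\boldsymbol\beta_\iota)$; $\mathbf z_\nu:=\boldsymbol\lambda_{\nu\iota}(\mathbf u)\mathbf z_\iota+\boldsymbol\lambda_{\nu\nu}(\mathbf u)\mathbf z_\nu+\mathbf n_\nu$, $\mathbf n_\nu\sim\mathcal N(\boldsymbol\mu_\nu(\mathbf u),\operatorname{diag}\boldsymbol\beta_\nu(\mathbf u))$ (non-degenerate, positive variances), independent of $\mathbf n_\iota$; $\mathbf x:=\mathrm g(\mathbf z)$. The matrices $\boldsymbol\lambda_{\iota\iota}$ and $\boldsymbol\lambda_{\nu\nu}(\mathbf u)$ are strictly lower triangular (DAG constraint), so the structural equations have a unique solution $\mathbf z$ for given noises and $\mathbf u$, which is linear in $(\mathbf n_\iota,\mathbf n_\nu)$. *)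

theory Defs
  imports "HOL-Probability.Probability"
begin

fun iter_dderiv :: "'a::real_normed_vector list \<Rightarrow> ('a \<Rightarrow> 'b::real_normed_vector) \<Rightarrow> 'a \<Rightarrow> 'b" where
  "iter_dderiv [] f = f"
| "iter_dderiv (v # vs) f = (\<lambda>x. frechet_derivative (iter_dderiv vs f) (at x) v)"

definition smooth :: "('a::real_normed_vector \<Rightarrow> 'b::real_normed_vector) \<Rightarrow> bool" where
  "smooth f \<longleftrightarrow> (\<forall>vs. \<forall>x. iter_dderiv vs f differentiable (at x))"

definition strictly_lower :: "real^('n::{finite,linorder})^('n::{finite,linorder}) \<Rightarrow> bool" where
  "strictly_lower A \<longleftrightarrow> (\<forall>i j. i \<le> j \<longrightarrow> A $ i $ j = 0)"

text \<open>Gaussian distribution N(mu, diag beta) on real^'n (beta = variances).\<close>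
definition gauss_diag :: "real^'n \<Rightarrow> real^'n \<Rightarrow> (real^'n) measure" where
  "gauss_diag \<mu> \<beta> = density lborel (\<lambda>x. ennreal (\<Prod>i\<in>UNIV. normal_density (\<mu> $ i) (sqrt (\<beta> $ i)) (x $ i)))"

definition sem_eqs :: "real^'i^'i \<Rightarrow> real^'i^'v \<Rightarrow> real^'v^'v \<Rightarrow> real^'i \<Rightarrow> real^'v
    \<Rightarrow> (real^'i) \<times> (real^'v) \<Rightarrow> bool" where
  "sem_eqs Lii Lni Lnn ni nn z \<longleftrightarrow>
     fst z = Lii *v fst z + ni \<and> snd z = Lni *v fst z + Lnn *v snd z + nn"

definition sem_sol :: "real^'i^'i \<Rightarrow> real^'i^'v \<Rightarrow> real^'v^'v \<Rightarrow> real^'i \<Rightarrow> real^'v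
    \<Rightarrow> (real^'i) \<times> (real^'v)" where
  "sem_sol Lii Lni Lnn ni nn = (THE z. sem_eqs Lii Lni Lnn ni nn z)"

end

theory Submission imports Defs begin

abbreviation DD :: "'a::real_normed_vector \<Rightarrow> ('a \<Rightarrow> 'b::real_normed_vector) \<Rightarrow> 'a \<Rightarrow> 'b" where
  "DD v h \<equiv> (\<lambda>x. frechet_derivative h (at x) v)"

lemma smooth_coinduct:
  assumes cl: "\<And>h. h \<in> S \<Longrightarrow> (\<forall>x. h differentiable (at x)) \<and> (\<forall>v. DD v h \<in> S)"
    and h: "h \<in> S"
  shows "smooth h"
proof -
  have "\<forall>h\<in>S. iter_dderiv vs h \<in> S" for vs
    by (induction vs) (use cl in auto)
  then show ?thesis using h cl unfolding smooth_def by blast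
qed

lemma iter_dderiv_append: "iter_dderiv (vs @ ws) h = iter_dderiv vs (iter_dderiv ws h)"
  by (induction vs) auto

lemma smooth_DD: assumes "smooth h" shows "smooth (DD v h)"
  unfolding smooth_def
proof (intro allI)
  fix vs x
  have "iter_dderiv vs (DD v h) = iter_dderiv (vs @ [v]) h"
    by (simp add: iter_dderiv_append)
  then show "iter_dderiv vs (DD v h) differentiable at x"
    using assms unfolding smooth_def by simp
qed

lemma smooth_diff: assumes "smooth h" shows "h differentiable (at x)"
  using assms unfolding smooth_def by (metis iter_dderiv.simps(1))

lemma DD_eq: "(h has_derivative h') (at x) \<Longrightarrow> frechet_derivative h (at x) v = h' v"
  using frechet_derivative_at[of h h' x] by simp

lemma smooth_const: "smooth (\<lambda>x. c)"
proof (rule smooth_coinduct[where S="range (\<lambda>c x. c)"])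
  fix h :: "'a \<Rightarrow> 'b" assume "h \<in> range (\<lambda>c x. c)"
  then obtain c where c: "h = (\<lambda>x. c)" by auto
  have "DD v h = (\<lambda>x. 0)" for v
    unfolding c using DD_eq[OF has_derivative_const] by auto
  then show "(\<forall>x. h differentiable (at x)) \<and> (\<forall>v. DD v h \<in> range (\<lambda>c x. c))"
    using c by auto
qed auto

lemma smooth_id: "smooth (\<lambda>x. x)"
proof (rule smooth_coinduct[where S="insert (\<lambda>x. x) (range (\<lambda>c x. c))"])
  fix h :: "'a \<Rightarrow> 'a" assume "h \<in> insert (\<lambda>x. x) (range (\<lambda>c x. c))"
  then consider "h = (\<lambda>x. x)" | c where "h = (\<lambda>x. c)" by auto
  then show "(\<forall>x. h differentiable (at x)) \<and> (\<forall>v. DD v h \<in> insert (\<lambda>x. x) (range (\<lambda>c x. c)))"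
  proof cases
    case 1
    have "DD v h = (\<lambda>x. v)" for v
      unfolding 1 using DD_eq[OF has_derivative_ident] by auto
    then show ?thesis using 1 by auto
  next
    case 2
    have "DD v h = (\<lambda>x. 0)" for v
      unfolding 2 using DD_eq[OF has_derivative_const] by auto
    then show ?thesis using 2 by auto
  qed
qed auto

lemma smooth_linear_comp:
  assumes l: "bounded_linear l" and h: "smooth h"
  shows "smooth (\<lambda>x. l (h x))"
proof (rule smooth_coinduct[where S="{(\<lambda>x. l (h x)) | h. smooth h}"])
  fix k assume "k \<in> {(\<lambda>x. l (h x)) | h. smooth h}"
  then obtain h where k: "k = (\<lambda>x. l (h x))" and h: "smooth h" by auto
  have hd: "(h has_derivative frechet_derivative h (at x)) (at x)" for x
    using smooth_diff[OF h] frechet_derivative_works by blast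
  have kd: "(k has_derivative (\<lambda>w. l (frechet_derivative h (at x) w))) (at x)" for x
    unfolding k using bounded_linear.has_derivative[OF l hd] .
  have "DD v k = (\<lambda>x. l (DD v h x))" for v
    using DD_eq[OF kd] by auto
  then show "(\<forall>x. k differentiable (at x)) \<and> (\<forall>v. DD v k \<in> {(\<lambda>x. l (h x)) | h. smooth h})"
  proof (intro conjI allI)
    fix x show "k differentiable (at x)" using kd[of x] unfolding differentiable_def by blast
  next
    fix v show "DD v k \<in> {(\<lambda>x. l (h x)) | h. smooth h}"
      unfolding \<open>DD v k = (\<lambda>x. l (DD v h x))\<close> using smooth_DD[OF h, of v] by (auto intro!: exI[of _ "DD v h"])
  qed
qed (use h in auto)

lemma smooth_bounded_linear: "bounded_linear l \<Longrightarrow> smooth l"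
  using smooth_linear_comp[OF _ smooth_id] by auto

inductive_set smprod :: "('a::real_normed_vector \<Rightarrow> 'b::real_normed_vector) set" where
  base: "smooth a \<Longrightarrow> smooth b \<Longrightarrow> (\<lambda>x. a x *\<^sub>R b x) \<in> smprod"
| add: "p \<in> smprod \<Longrightarrow> q \<in> smprod \<Longrightarrow> (\<lambda>x. p x + q x) \<in> smprod"

lemma smprod_closed:
  "p \<in> smprod \<Longrightarrow> (\<forall>x. p differentiable (at x)) \<and> (\<forall>v. DD v p \<in> smprod)"
proof (induction rule: smprod.induct)
  case (base a b)
  have ad: "(a has_derivative frechet_derivative a (at x)) (at x)" for x
    using smooth_diff[OF base(1)] frechet_derivative_works by blast
  have bd: "(b has_derivative frechet_derivative b (at x)) (at x)" for x
    using smooth_diff[OF base(2)] frechet_derivative_works by blast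
  have pd: "((\<lambda>x. a x *\<^sub>R b x) has_derivative
      (\<lambda>w. a x *\<^sub>R frechet_derivative b (at x) w + frechet_derivative a (at x) w *\<^sub>R b x)) (at x)" for x
    using has_derivative_scaleR[OF ad bd] .
  have "DD v (\<lambda>x. a x *\<^sub>R b x) = (\<lambda>x. a x *\<^sub>R DD v b x + DD v a x *\<^sub>R b x)" for v
    using DD_eq[OF pd] by auto
  moreover have "(\<lambda>x. a x *\<^sub>R DD v b x + DD v a x *\<^sub>R b x) \<in> smprod" for v
    by (intro smprod.intros smooth_DD base)
  ultimately show ?case
  proof (intro conjI allI)
    fix x show "(\<lambda>x. a x *\<^sub>R b x) differentiable at x"
      using pd[of x] unfolding differentiable_def by blast
  qed simp
next
  case (add p q)
  have pd: "(p has_derivative frechet_derivative p (at x)) (at x)" for x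
    using add frechet_derivative_works by blast
  have qd: "(q has_derivative frechet_derivative q (at x)) (at x)" for x
    using add frechet_derivative_works by blast
  have sd: "((\<lambda>x. p x + q x) has_derivative
      (\<lambda>w. frechet_derivative p (at x) w + frechet_derivative q (at x) w)) (at x)" for x
    using has_derivative_add[OF pd qd] .
  have "DD v (\<lambda>x. p x + q x) = (\<lambda>x. DD v p x + DD v q x)" for v
    using DD_eq[OF sd] by auto
  then show ?case
  proof (intro conjI allI)
    fix x show "(\<lambda>x. p x + q x) differentiable at x"
      using sd[of x] unfolding differentiable_def by blast
  next
    fix v assume e: "\<And>v. DD v (\<lambda>x. p x + q x) = (\<lambda>x. DD v p x + DD v q x)"
    show "DD v (\<lambda>x. p x + q x) \<in> smprod"
      unfolding e using add.IH smprod.add by blast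
  qed
qed

lemma smooth_scaleR: "smooth a \<Longrightarrow> smooth b \<Longrightarrow> smooth (\<lambda>x. a x *\<^sub>R b x)"
  by (rule smooth_coinduct[where S=smprod]) (simp_all add: smprod_closed smprod.base)

lemma smooth_mult: "smooth a \<Longrightarrow> smooth b \<Longrightarrow> smooth (\<lambda>x. a x * (b x :: real))"
  using smooth_scaleR[of a b] by simp

inductive_set smcomp :: "('a::real_normed_vector \<Rightarrow> 'b::euclidean_space) \<Rightarrow> ('a \<Rightarrow> 'c::real_normed_vector) set"
  for g where
  base: "smooth a \<Longrightarrow> smooth k \<Longrightarrow> (\<lambda>x. a x *\<^sub>R k (g x)) \<in> smcomp g"
| add: "p \<in> smcomp g \<Longrightarrow> q \<in> smcomp g \<Longrightarrow> (\<lambda>x. p x + q x) \<in> smcomp g"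

lemma smcomp_zero: "(\<lambda>x. 0) \<in> smcomp g"
  using smcomp.base[OF smooth_const[of 0] smooth_const[of 0], of g] by simp

lemma smcomp_sum: "finite I \<Longrightarrow> (\<forall>i\<in>I. F i \<in> smcomp g) \<Longrightarrow> (\<lambda>x. \<Sum>i\<in>I. F i x) \<in> smcomp g"
proof (induction I rule: finite_induct)
  case empty
  then show ?case using smcomp_zero by simp
next
  case (insert i I)
  have e: "(\<lambda>x. \<Sum>i\<in>insert i I. F i x) = (\<lambda>x. F i x + (\<Sum>i\<in>I. F i x))"
    using insert(1,2) by simp
  have "F i \<in> smcomp g" "(\<lambda>x. \<Sum>i\<in>I. F i x) \<in> smcomp g" using insert by auto
  then have "(\<lambda>x. F i x + (\<Sum>i\<in>I. F i x)) \<in> smcomp g" by (rule smcomp.add)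
  then show ?case unfolding e .
qed

lemma lin_expand:
  fixes Dk :: "'b::euclidean_space \<Rightarrow> 'c::real_normed_vector"
  assumes "linear Dk"
  shows "Dk w = (\<Sum>i\<in>Basis. (w \<bullet> i) *\<^sub>R Dk i)"
proof -
  have "Dk w = Dk (\<Sum>i\<in>Basis. (w \<bullet> i) *\<^sub>R i)" by (simp add: euclidean_representation)
  also have "\<dots> = (\<Sum>i\<in>Basis. (w \<bullet> i) *\<^sub>R Dk i)"
    using assms by (simp add: linear_sum linear_scale)
  finally show ?thesis .
qed

lemma smcomp_closed:
  assumes g: "smooth g"
  shows "p \<in> smcomp g \<Longrightarrow> (\<forall>x. p differentiable (at x)) \<and> (\<forall>v. DD v p \<in> smcomp g)"
proof (induction rule: smcomp.induct)
  case (base a k)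
  have ad: "(a has_derivative frechet_derivative a (at x)) (at x)" for x
    using smooth_diff[OF base(1)] frechet_derivative_works by blast
  have kd: "(k has_derivative frechet_derivative k (at y)) (at y)" for y
    using smooth_diff[OF base(2)] frechet_derivative_works by blast
  have gd: "(g has_derivative frechet_derivative g (at x)) (at x)" for x
    using smooth_diff[OF g] frechet_derivative_works by blast
  have cd: "((\<lambda>x. k (g x)) has_derivative (\<lambda>w. frechet_derivative k (at (g x)) (frechet_derivative g (at x) w))) (at x)" for x
    using has_derivative_compose[OF gd kd] .
  have pd: "((\<lambda>x. a x *\<^sub>R k (g x)) has_derivative
      (\<lambda>w. a x *\<^sub>R frechet_derivative k (at (g x)) (frechet_derivative g (at x) w) + frechet_derivative a (at x) w *\<^sub>R k (g x))) (at x)" for x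
    using has_derivative_scaleR[OF ad cd] .
  have lin: "linear (frechet_derivative k (at y))" for y
    using kd has_derivative_linear by blast
  have "DD v (\<lambda>x. a x *\<^sub>R k (g x)) = (\<lambda>x. (\<Sum>i\<in>Basis. (a x * (DD v g x \<bullet> i)) *\<^sub>R DD i k (g x)) + DD v a x *\<^sub>R k (g x))" for v
  proof
    fix x
    have "DD v (\<lambda>x. a x *\<^sub>R k (g x)) x = a x *\<^sub>R frechet_derivative k (at (g x)) (DD v g x) + DD v a x *\<^sub>R k (g x)"
      using DD_eq[OF pd] by auto
    also have "\<dots> = a x *\<^sub>R (\<Sum>i\<in>Basis. (DD v g x \<bullet> i) *\<^sub>R DD i k (g x)) + DD v a x *\<^sub>R k (g x)"
      by (simp only: lin_expand[OF lin, of "g x" "DD v g x"])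
    also have "\<dots> = (\<Sum>i\<in>Basis. (a x * (DD v g x \<bullet> i)) *\<^sub>R DD i k (g x)) + DD v a x *\<^sub>R k (g x)"
      by (simp add: scaleR_sum_right)
    finally show "DD v (\<lambda>x. a x *\<^sub>R k (g x)) x = (\<Sum>i\<in>Basis. (a x * (DD v g x \<bullet> i)) *\<^sub>R DD i k (g x)) + DD v a x *\<^sub>R k (g x)" .
  qed
  moreover have "(\<lambda>x. (\<Sum>i\<in>Basis. (a x * (DD v g x \<bullet> i)) *\<^sub>R DD i k (g x)) + DD v a x *\<^sub>R k (g x)) \<in> smcomp g" for v
  proof -
    have t: "(\<lambda>x. (a x * (DD v g x \<bullet> i)) *\<^sub>R DD i k (g x)) \<in> smcomp g" for i :: 'b
    proof -
      have s1: "smooth (\<lambda>x. DD v g x \<bullet> i)"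
        by (rule smooth_linear_comp[OF bounded_linear_inner_left smooth_DD[OF g]])
      have s2: "smooth (\<lambda>x. a x * (DD v g x \<bullet> i))" by (rule smooth_mult[OF base(1) s1])
      show ?thesis by (rule smcomp.base[OF s2 smooth_DD[OF base(2)]])
    qed
    have S: "(\<lambda>x. \<Sum>i\<in>Basis. (a x * (DD v g x \<bullet> i)) *\<^sub>R DD i k (g x)) \<in> smcomp g"
      by (rule smcomp_sum[of Basis "\<lambda>i x. (a x * (DD v g x \<bullet> i)) *\<^sub>R DD i k (g x)"]) (simp_all add: t)
    have B: "(\<lambda>x. DD v a x *\<^sub>R k (g x)) \<in> smcomp g"
      by (rule smcomp.base[OF smooth_DD[OF base(1)] base(2)])
    show ?thesis by (rule smcomp.add[OF S B])
  qed
  ultimately show ?case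
  proof (intro conjI allI)
    fix x show "(\<lambda>x. a x *\<^sub>R k (g x)) differentiable at x"
      using pd[of x] unfolding differentiable_def by blast
  qed simp
next
  case (add p q)
  have pd: "(p has_derivative frechet_derivative p (at x)) (at x)" for x
    using add frechet_derivative_works by blast
  have qd: "(q has_derivative frechet_derivative q (at x)) (at x)" for x
    using add frechet_derivative_works by blast
  have sd: "((\<lambda>x. p x + q x) has_derivative
      (\<lambda>w. frechet_derivative p (at x) w + frechet_derivative q (at x) w)) (at x)" for x
    using has_derivative_add[OF pd qd] .
  have "DD v (\<lambda>x. p x + q x) = (\<lambda>x. DD v p x + DD v q x)" for v
    using DD_eq[OF sd] by auto
  then show ?case
  proof (intro conjI allI)
    fix x show "(\<lambda>x. p x + q x) differentiable at x"
      using sd[of x] unfolding differentiable_def by blast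
  next
    fix v assume e: "\<And>v. DD v (\<lambda>x. p x + q x) = (\<lambda>x. DD v p x + DD v q x)"
    show "DD v (\<lambda>x. p x + q x) \<in> smcomp g"
      unfolding e using add.IH smcomp.add by blast
  qed
qed

lemma smooth_compose:
  fixes g :: "'a::real_normed_vector \<Rightarrow> 'b::euclidean_space" and k :: "'b \<Rightarrow> 'c::real_normed_vector"
  assumes k: "smooth k" and g: "smooth g"
  shows "smooth (\<lambda>x. k (g x))"
proof -
  have "(\<lambda>x. (\<lambda>x. 1) x *\<^sub>R k (g x)) \<in> smcomp g"
    by (rule smcomp.base[OF smooth_const k])
  then have "(\<lambda>x. k (g x)) \<in> smcomp g" by simp
  note m = this
  show ?thesis
  proof (rule smooth_coinduct[where S="smcomp g"])
    fix h :: "'a \<Rightarrow> 'c" assume "h \<in> smcomp g"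
    then show "(\<forall>x. h differentiable (at x)) \<and> (\<forall>v. DD v h \<in> smcomp g)"
      by (rule smcomp_closed[OF g])
  qed (rule m)
qed

lemma lower_fix_zero:
  fixes L :: "real^('n::{finite,linorder})^('n::{finite,linorder})"
  assumes L: "strictly_lower L" and z: "L *v z = z"
  shows "z = 0"
proof (rule ccontr)
  assume "z \<noteq> 0"
  then have ne: "{i. z $ i \<noteq> 0} \<noteq> {}" by (auto simp: vec_eq_iff)
  define i where "i = Min {i. z $ i \<noteq> 0}"
  have zi: "z $ i \<noteq> 0" using Min_in[OF _ ne] i_def by auto
  have lt: "z $ j = 0" if "j < i" for j
  proof (rule ccontr)
    assume "z $ j \<noteq> 0"
    then have "i \<le> j" unfolding i_def by (intro Min_le) auto
    with that show False by simp
  qed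
  have "z $ i = (L *v z) $ i" using z by simp
  also have "\<dots> = (\<Sum>j\<in>UNIV. L $ i $ j * z $ j)"
    by (simp add: matrix_vector_mult_def)
  also have "\<dots> = 0"
  proof (rule sum.neutral, rule ballI)
    fix j
    show "L $ i $ j * z $ j = 0"
    proof (cases "i \<le> j")
      case True then show ?thesis using L unfolding strictly_lower_def by simp
    next
      case False then show ?thesis using lt by simp
    qed
  qed
  finally show False using zi by simp
qed

lemma lower_unique:
  fixes L :: "real^('n::{finite,linorder})^('n::{finite,linorder})"
  assumes L: "strictly_lower L"
  shows "\<exists>!z. z = L *v z + n"
proof -
  define T where "T = (\<lambda>z. z - L *v z)"
  have lin: "linear T" unfolding T_def
    by (intro linear_compose_sub linear_ident matrix_vector_mul_linear)
  have inj: "inj T"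
  proof (rule injI)
    fix a b assume "T a = T b"
    then have e: "a - L *v a = b - L *v b" unfolding T_def .
    have "L *v (a - b) - (a - b) = (b - L *v b) - (a - L *v a)"
      by (simp add: matrix_vector_mult_diff_distrib algebra_simps)
    then have "L *v (a - b) - (a - b) = 0" unfolding e by simp
    then have "L *v (a - b) = a - b" by simp
    then show "a = b" using lower_fix_zero[OF L, of "a - b"] by simp
  qed
  have "surj T" using linear_inj_imp_surj[OF lin inj] .
  then obtain z where "T z = n" by (metis surjD)
  then have ex: "z = L *v z + n" unfolding T_def by (metis eq_diff_eq add.commute)
  show ?thesis
  proof (rule ex1I[of _ z])
    show "z = L *v z + n" by (rule ex)
  next
    fix y assume "y = L *v y + n"
    then have "T y = n" unfolding T_def by (metis eq_diff_eq add.commute)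
    moreover have "T z = n" using ex unfolding T_def by (metis eq_diff_eq add.commute)
    ultimately have "T y = T z" by simp
    then show "y = z" using inj by (meson injD)
  qed
qed

lemma sem_unique:
  assumes "strictly_lower Lii" "strictly_lower Lnn"
  shows "\<exists>!z. sem_eqs Lii Lni Lnn ni nn z"
proof -
  obtain zi where zi: "zi = Lii *v zi + ni" and zi_u: "\<And>y. y = Lii *v y + ni \<Longrightarrow> y = zi"
    using lower_unique[OF assms(1), of ni] by blast
  obtain zv where zv: "zv = Lnn *v zv + (Lni *v zi + nn)"
    and zv_u: "\<And>y. y = Lnn *v y + (Lni *v zi + nn) \<Longrightarrow> y = zv"
    using lower_unique[OF assms(2), of "Lni *v zi + nn"] by blast
  show ?thesis
  proof (rule ex1I[of _ "(zi, zv)"])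
    have r: "Lnn *v zv + (Lni *v zi + nn) = Lni *v zi + Lnn *v zv + nn" by (simp add: algebra_simps)
    have "zv = Lni *v zi + Lnn *v zv + nn" using zv r by (rule trans)
    then show "sem_eqs Lii Lni Lnn ni nn (zi, zv)" unfolding sem_eqs_def prod.sel using zi by blast
  next
    fix z assume "sem_eqs Lii Lni Lnn ni nn z"
    then have h1: "fst z = Lii *v fst z + ni" and h2: "snd z = Lni *v fst z + Lnn *v snd z + nn"
      unfolding sem_eqs_def by blast+
    have f: "fst z = zi" by (rule zi_u[OF h1])
    have r: "Lni *v fst z + Lnn *v snd z + nn = Lnn *v snd z + (Lni *v zi + nn)"
      unfolding f by (simp add: algebra_simps)
    have "snd z = zv" by (rule zv_u) (rule trans[OF h2 r])
    note f this
    then show "z = (zi, zv)" by (simp add: prod_eq_iff)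
  qed
qed

lemma sem_sol_eqs:
  assumes "strictly_lower Lii" "strictly_lower Lnn"
  shows "sem_eqs Lii Lni Lnn ni nn (sem_sol Lii Lni Lnn ni nn)"
  unfolding sem_sol_def using theI'[OF sem_unique[OF assms]] .

lemma sem_sol_eqI:
  assumes "strictly_lower Lii" "strictly_lower Lnn" "sem_eqs Lii Lni Lnn ni nn z"
  shows "sem_sol Lii Lni Lnn ni nn = z"
  unfolding sem_sol_def using the1_equality[OF sem_unique[OF assms(1,2)] assms(3)] .

lemma sem_eqs_add:
  assumes "sem_eqs Lii Lni Lnn ni nn z" "sem_eqs Lii Lni Lnn ni' nn' z'"
  shows "sem_eqs Lii Lni Lnn (ni + ni') (nn + nn') (z + z')"
proof -
  obtain a b where z: "z = (a, b)" by fastforce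
  obtain c d where z': "z' = (c, d)" by fastforce
  have h1: "Lii *v a + ni = a" and h2: "Lni *v a + Lnn *v b + nn = b"
    using assms(1) unfolding z sem_eqs_def prod.sel by (blast intro: sym)+
  have h3: "Lii *v c + ni' = c" and h4: "Lni *v c + Lnn *v d + nn' = d"
    using assms(2) unfolding z' sem_eqs_def prod.sel by (blast intro: sym)+
  have e1: "Lii *v (a + c) + (ni + ni') = (Lii *v a + ni) + (Lii *v c + ni')"
    by (simp add: algebra_simps)
  have e2: "Lni *v (a + c) + Lnn *v (b + d) + (nn + nn') = (Lni *v a + Lnn *v b + nn) + (Lni *v c + Lnn *v d + nn')"
    by (simp add: algebra_simps)
  show ?thesis unfolding z z' sem_eqs_def
    by (simp only: fst_add snd_add prod.sel e1 e2 h1 h2 h3 h4)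
qed

lemma sem_eqs_scale:
  assumes "sem_eqs Lii Lni Lnn ni nn z"
  shows "sem_eqs Lii Lni Lnn (k *\<^sub>R ni) (k *\<^sub>R nn) (k *\<^sub>R z)"
proof -
  obtain a b where z: "z = (a, b)" by fastforce
  have h1: "Lii *v a + ni = a" and h2: "Lni *v a + Lnn *v b + nn = b"
    using assms(1) unfolding z sem_eqs_def prod.sel by (blast intro: sym)+
  have e1: "Lii *v (k *\<^sub>R a) + k *\<^sub>R ni = k *\<^sub>R (Lii *v a + ni)"
    by (simp add: algebra_simps)
  have e2: "Lni *v (k *\<^sub>R a) + Lnn *v (k *\<^sub>R b) + k *\<^sub>R nn = k *\<^sub>R (Lni *v a + Lnn *v b + nn)"
    by (simp add: algebra_simps)
  show ?thesis unfolding z sem_eqs_def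
    by (simp only: fst_scaleR snd_scaleR scaleR_Pair prod.sel e1 e2 h1 h2)
qed

lemma sem_sol_linear:
  assumes "strictly_lower Lii" "strictly_lower Lnn"
  shows "bounded_linear (\<lambda>p. sem_sol Lii Lni Lnn (fst p) (snd p))"
proof -
  let ?S = "\<lambda>p. sem_sol Lii Lni Lnn (fst p) (snd p)"
  have E: "sem_eqs Lii Lni Lnn (fst p) (snd p) (?S p)" for p
    using sem_sol_eqs[OF assms] .
  have "linear ?S"
  proof (rule linearI)
    fix p q
    show "?S (p + q) = ?S p + ?S q"
      using sem_sol_eqI[OF assms sem_eqs_add[OF E[of p] E[of q]]] by simp
  next
    fix c :: real and p
    show "?S (c *\<^sub>R p) = c *\<^sub>R ?S p"
      using sem_sol_eqI[OF assms sem_eqs_scale[OF E[of p]]] by simp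
  qed
  then show ?thesis by (simp add: linear_conv_bounded_linear)
qed

lemma gauss_dens_meas:
  "(\<lambda>x::real^'n. ennreal (\<Prod>i\<in>UNIV. normal_density (\<mu> $ i) (sqrt (\<beta> $ i)) (x $ i))) \<in> borel_measurable lborel"
  by measurable

lemma gauss_sets: "sets (gauss_diag \<mu> \<beta>) = sets borel"
  by (simp add: gauss_diag_def)

lemma gauss_sf: "sigma_finite_measure (gauss_diag \<mu> \<beta>)"
  unfolding gauss_diag_def
  by (subst sigma_finite_measure.sigma_finite_iff_density_finite[OF sigma_finite_lborel gauss_dens_meas]) simp

lemma gauss_pos:
  fixes \<mu> \<beta> :: "real^'n"
  assumes pos: "\<And>i. \<beta> $ i > 0" and A: "open A" "A \<noteq> {}"
  shows "emeasure (gauss_diag \<mu> \<beta>) A > 0"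
proof (rule ccontr)
  let ?f = "\<lambda>x::real^'n. ennreal (\<Prod>i\<in>UNIV. normal_density (\<mu> $ i) (sqrt (\<beta> $ i)) (x $ i))"
  assume "\<not> ?thesis"
  then have z: "emeasure (gauss_diag \<mu> \<beta>) A = 0" by (simp add: not_gr_zero)
  have Am: "A \<in> sets lborel" using A(1) by simp
  have "(\<integral>\<^sup>+ x. ?f x * indicator A x \<partial>lborel) = 0"
    using z unfolding gauss_diag_def by (simp add: emeasure_density[OF gauss_dens_meas Am])
  then have ae0: "AE x in lborel. ?f x * indicator A x = 0"
    by (subst (asm) nn_integral_0_iff_AE) (use Am gauss_dens_meas in auto)
  have fpos: "?f x > 0" for x
    using pos by (auto intro!: prod_pos normal_density_pos)
  have ae: "AE x in lborel. x \<notin> A"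
    using ae0 by (rule eventually_mono) (use fpos in \<open>auto simp: ennreal_eq_0_iff not_le[symmetric] split: split_indicator\<close>)
  obtain x where "x \<in> A" using A by auto
  then obtain a b where box: "box a b \<subseteq> A" "\<forall>i\<in>Basis. a \<bullet> i < b \<bullet> i"
    using open_contains_box[OF A(1)] by metis
  have "emeasure lborel A = 0"
    using ae Am by (subst (asm) AE_iff_measurable[of A]) auto
  then have "emeasure lborel (box a b) = 0"
    using emeasure_mono[OF box(1) Am] by simp
  moreover have "emeasure lborel (box a b) > 0"
  proof -
    have le: "\<And>i. i \<in> Basis \<Longrightarrow> a \<bullet> i \<le> b \<bullet> i" using box(2) less_imp_le by blast
    have "0 < (\<Prod>i\<in>Basis. (b - a) \<bullet> i)"
      by (rule prod_pos) (use box(2) in \<open>simp add: inner_diff_left\<close>)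
    then show ?thesis by (simp only: emeasure_lborel_box[OF le] ennreal_less_zero_iff)
  qed
  ultimately show False by simp
qed

lemma ae_const:
  fixes F1 :: "'a::euclidean_space \<Rightarrow> 'c::t2_space" and F2 :: "'b::euclidean_space \<Rightarrow> 'c"
  assumes c1: "continuous_on UNIV F1" and c2: "continuous_on UNIV F2"
    and sf: "sigma_finite_measure M2"
    and s1: "sets M1 = sets borel" and s2: "sets M2 = sets borel"
    and p1: "\<And>A. open A \<Longrightarrow> A \<noteq> {} \<Longrightarrow> emeasure M1 A > 0"
    and p2: "\<And>A. open A \<Longrightarrow> A \<noteq> {} \<Longrightarrow> emeasure M2 A > 0"
    and ae: "AE p in M1 \<Otimes>\<^sub>M M2. F1 (fst p) = F2 (snd p)"
  shows "F1 a = F2 b"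
proof (rule ccontr)
  assume ne: "F1 a \<noteq> F2 b"
  have cc1: "continuous_on UNIV (\<lambda>p::'a\<times>'b. F1 (fst p))"
    by (rule continuous_on_compose2[OF c1 continuous_on_fst[OF continuous_on_id]]) simp
  have cc2: "continuous_on UNIV (\<lambda>p::'a\<times>'b. F2 (snd p))"
    by (rule continuous_on_compose2[OF c2 continuous_on_snd[OF continuous_on_id]]) simp
  have op: "open {p::'a\<times>'b. F1 (fst p) \<noteq> F2 (snd p)}"
    by (rule open_Collect_neq[OF cc1 cc2])
  have mem: "(a, b) \<in> {p::'a\<times>'b. F1 (fst p) \<noteq> F2 (snd p)}" using ne by simp
  obtain A B where AB0: "open A" "open B" "(a, b) \<in> A \<times> B" "A \<times> B \<subseteq> {p. F1 (fst p) \<noteq> F2 (snd p)}"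
    by (rule open_prod_elim[OF op mem])
  then have AB: "open A" "open B" "a \<in> A" "b \<in> B" "A \<times> B \<subseteq> {p. F1 (fst p) \<noteq> F2 (snd p)}"
    by auto
  have sp1: "space M1 = UNIV" using sets_eq_imp_space_eq[OF s1] by simp
  have sp2: "space M2 = UNIV" using sets_eq_imp_space_eq[OF s2] by simp
  obtain N where N: "{x \<in> space (M1 \<Otimes>\<^sub>M M2). \<not> F1 (fst x) = F2 (snd x)} \<subseteq> N"
    "emeasure (M1 \<Otimes>\<^sub>M M2) N = 0" "N \<in> sets (M1 \<Otimes>\<^sub>M M2)"
    using ae by (rule AE_E)
  have "A \<times> B \<subseteq> N" using N(1) AB(5) by (auto simp: space_pair_measure sp1 sp2)
  moreover have ABs: "A \<in> sets M1" "B \<in> sets M2" using AB s1 s2 by auto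
  ultimately have "emeasure (M1 \<Otimes>\<^sub>M M2) (A \<times> B) = 0"
    using emeasure_mono[OF _ N(3)] N(2) by (metis le_zero_eq)
  moreover have "emeasure (M1 \<Otimes>\<^sub>M M2) (A \<times> B) = emeasure M1 A * emeasure M2 B"
    using sigma_finite_measure.emeasure_pair_measure_Times[OF sf ABs] .
  moreover have "emeasure M1 A > 0" "emeasure M2 B > 0" using p1 p2 AB by auto
  ultimately show False by (metis mult_eq_0_iff less_irrefl)
qed

theorem lemma4:
  fixes Lii :: "real^('i::{finite,linorder})^('i::{finite,linorder})"
    and Lni :: "'u \<Rightarrow> real^('i::{finite,linorder})^('v::{finite,linorder})"
    and Lnn :: "'u \<Rightarrow> real^('v::{finite,linorder})^('v::{finite,linorder})"
    and mui betai :: "real^('i::{finite,linorder})"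
    and muv betav :: "'u \<Rightarrow> real^('v::{finite,linorder})"
    and g :: "(real^('i::{finite,linorder})) \<times> (real^('v::{finite,linorder})) \<Rightarrow> 'x::euclidean_space"
    and f :: "'x \<Rightarrow> (real^('i::{finite,linorder})) \<times> (real^('v::{finite,linorder}))"
  assumes dag_ii: "strictly_lower Lii"
    and dag_nn: "\<And>u. strictly_lower (Lnn u)"
    and pos_i: "\<And>k. betai $ k > 0"
    and pos_v: "\<And>u k. betav u $ k > 0"
    and g_smooth: "smooth g" and g_inv: "bij g"
    and f_smooth: "smooth f" and f_inv: "bij f"
    and invariance: "\<And>ni u u0. AE p in gauss_diag (muv u) (betav u) \<Otimes>\<^sub>M gauss_diag (muv u0) (betav u0).
          fst (f (g (sem_sol Lii (Lni u) (Lnn u) ni (fst p)))) =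
          fst (f (g (sem_sol Lii (Lni u0) (Lnn u0) ni (snd p))))"
  shows "\<exists>h :: real^('i::{finite,linorder}) \<Rightarrow> real^('i::{finite,linorder}). smooth h \<and>
           (\<forall>u. AE n in gauss_diag mui betai \<Otimes>\<^sub>M gauss_diag (muv u) (betav u).
                  fst (f (g (sem_sol Lii (Lni u) (Lnn u) (fst n) (snd n)))) = h (fst n))"
proof -
  let ?S = "\<lambda>u p. sem_sol Lii (Lni u) (Lnn u) (fst p) (snd p)"
  have bl: "bounded_linear (?S u)" for u
    using sem_sol_linear[OF dag_ii dag_nn] .
  have cf: "continuous_on UNIV f"
    using smooth_diff[OF f_smooth] by (intro continuous_at_imp_continuous_on ballI differentiable_imp_continuous_within) auto
  have cg: "continuous_on UNIV g"
    using smooth_diff[OF g_smooth] by (intro continuous_at_imp_continuous_on ballI differentiable_imp_continuous_within) auto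
  define F where "F u ni nn = fst (f (g (sem_sol Lii (Lni u) (Lnn u) ni nn)))" for u ni nn
  have cS: "continuous_on UNIV (\<lambda>nn. ?S u (ni, nn))" for u ni
    using continuous_on_compose2[OF bounded_linear.continuous_on[OF bl continuous_on_id] continuous_on_Pair[OF continuous_on_const continuous_on_id]]
    by auto
  have cF: "continuous_on UNIV (F u ni)" for u ni
  proof -
    have "continuous_on UNIV (\<lambda>nn. fst (f (g (?S u (ni, nn)))))"
      by (intro continuous_on_fst continuous_on_compose2[OF cf] continuous_on_compose2[OF cg] cS) auto
    then show ?thesis unfolding F_def by simp
  qed
  have key: "F u ni a = F u0 ni b" for u u0 ni a b
    by (rule ae_const[OF cF cF gauss_sf gauss_sets gauss_sets gauss_pos gauss_pos])
       (use pos_v invariance[of u ni u0] in \<open>auto simp: F_def\<close>)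
  define us where "us = (undefined :: 'u)"
  define h where "h ni = F us ni 0" for ni
  have lin0: "bounded_linear (\<lambda>ni::real^('i::{finite,linorder}). (ni, 0::real^('v::{finite,linorder})))"
    by (intro bounded_linear_Pair bounded_linear_ident bounded_linear_zero)
  have "smooth h"
  proof -
    have s0: "smooth (\<lambda>ni. ?S us (ni, 0))"
      by (rule smooth_bounded_linear) (rule bounded_linear_compose[OF bl lin0])
    have s1: "smooth (\<lambda>ni. g (?S us (ni, 0)))" by (rule smooth_compose[OF g_smooth s0])
    have s2: "smooth (\<lambda>ni. f (g (?S us (ni, 0))))" by (rule smooth_compose[OF f_smooth s1])
    have "smooth (\<lambda>ni. fst (f (g (?S us (ni, 0)))))" by (rule smooth_linear_comp[OF bounded_linear_fst s2])
    then show ?thesis unfolding h_def F_def by simp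
  qed
  moreover have "\<forall>u. AE n in gauss_diag mui betai \<Otimes>\<^sub>M gauss_diag (muv u) (betav u).
                  fst (f (g (sem_sol Lii (Lni u) (Lnn u) (fst n) (snd n)))) = h (fst n)"
    using key unfolding h_def F_def by (auto intro!: AE_I2)
  ultimately show ?thesis by blast
qed

end
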